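(* For any graph $G=(V,E)$, the evolution algebras $\mathcal{A}(G)$ and $\mathcal{A}_{RW}(G)$ are strongly isotopic; that is, there exist non-singular $\mathbb{R}$-linear maps $f,h:\mathcal{A}(G)\to\mathcal{A}_{RW}(G)$ such that $f(u)\cdot f(v)=h(u\cdot v)$ for all $u,v\in\mathcal{A}(G)$.
   Context: Graphs are simple (no loops or multiple edges), connected, with a countable (finite or infinite) vertex set $V$, and locally finite: $\deg(i)<\infty$ for every vertex $i$, where $\deg(i)$ is the number of neighbors of $i$. The adjacency matrix is $A=(a_{ij})$ with $a_{ij}=1$ if $i,j$ are neighbors and $0$ otherwise. An evolution algebra over $\mathbb{R}$ is an algebra with a countable basis $\{e_i\}$ (natural basis) such that $e_i\cdot e_j=0$ for $i\neq j$ and $e_i\cdot e_i=\sum_k c_{ik}e_k$. $\mathcal{A}(G)$ is the evolution algebra with natural basis $\{e_i:i\in V\}$ and $e_i\cdot e_i=\sum_{k\in V}a_{ik}e_k$, $e_i\cdot e_j=0$ for $i\ne j$. $\mathcal{A}_{RW}(G)$ is the evolution algebra with natural basis $\{e_i:i\in V\}$ and $e_i\cdot e_i=\sum_{k\in V}\frac{a_{ik}}{\deg(i)}e_k$, $e_i\cdot e_j=0$ for $i\ne j$ (the algebra of the symmetric random walk on $G$). A triple $(f,g,h)$ of non-singular linear maps $\mathcal{A}\to\mathcal{B}$ with $f(u)\cdot g(v)=h(u\cdot v)$ for all $u,v$ is an isotopism; it is a strong isotopism if $f=g$. *)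

theory Defs
  imports Complex_Main "HOL-Library.Countable"
begin

definition graph :: "('v::countable \<Rightarrow> 'v \<Rightarrow> bool) \<Rightarrow> bool" where
  "graph E \<longleftrightarrow> (\<forall>i j. E i j \<longrightarrow> E j i) \<and> (\<forall>i. \<not> E i i)
     \<and> (\<forall>i. finite {j. E i j}) \<and> (\<forall>i j. E\<^sup>*\<^sup>* i j)"

definition deg :: "('v \<Rightarrow> 'v \<Rightarrow> bool) \<Rightarrow> 'v \<Rightarrow> nat" where
  "deg E i = card {j. E i j}"

text \<open>Elements of an evolution algebra with natural basis indexed by 'v:
  finitely supported coefficient functions.\<close>
definition fin_supp :: "('v \<Rightarrow> real) set" where
  "fin_supp = {x. finite {i. x i \<noteq> 0}}"

text \<open>Product of the evolution algebra with structure constants c: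
  e_i e_j = 0 (i \<noteq> j), e_i e_i = sum_k c i k e_k.\<close>
definition evo_mult :: "('v \<Rightarrow> 'v \<Rightarrow> real) \<Rightarrow> ('v \<Rightarrow> real) \<Rightarrow> ('v \<Rightarrow> real) \<Rightarrow> ('v \<Rightarrow> real)" where
  "evo_mult c x y = (\<lambda>k. \<Sum>i\<in>{i. x i \<noteq> 0 \<and> y i \<noteq> 0}. x i * y i * c i k)"

definition adj_coeff :: "('v \<Rightarrow> 'v \<Rightarrow> bool) \<Rightarrow> 'v \<Rightarrow> 'v \<Rightarrow> real" where
  "adj_coeff E i k = (if E i k then 1 else 0)"

definition rw_coeff :: "('v \<Rightarrow> 'v \<Rightarrow> bool) \<Rightarrow> 'v \<Rightarrow> 'v \<Rightarrow> real" where
  "rw_coeff E i k = (if E i k then 1 / real (deg E i) else 0)"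

definition nonsingular_linear :: "(('v \<Rightarrow> real) \<Rightarrow> ('v \<Rightarrow> real)) \<Rightarrow> bool" where
  "nonsingular_linear f \<longleftrightarrow>
     (\<forall>x\<in>fin_supp. \<forall>y\<in>fin_supp. f (\<lambda>i. x i + y i) = (\<lambda>i. f x i + f y i))
   \<and> (\<forall>a. \<forall>x\<in>fin_supp. f (\<lambda>i. a * x i) = (\<lambda>i. a * f x i))
   \<and> bij_betw f fin_supp fin_supp"

end

theory Submission
  imports Defs
begin

definition dd :: "('v \<Rightarrow> 'v \<Rightarrow> bool) \<Rightarrow> 'v \<Rightarrow> real" where
  "dd E i = (if deg E i = 0 then 1 else real (deg E i))"

lemma dd_pos: "dd E i > 0" unfolding dd_def by auto

lemma sq_pos: "sqrt (dd E i) > 0" using dd_pos by simp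

lemma scale_lin:
  "nonsingular_linear (\<lambda>x i. sqrt (dd E i) * x i)"
proof -
  let ?f = "\<lambda>x i. sqrt (dd E i) * x i"
  let ?g = "\<lambda>x i. x i / sqrt (dd E i)"
  have s: "\<And>x. {i. ?f x i \<noteq> 0} = {i. x i \<noteq> 0}" using sq_pos
    by (metis (no_types, lifting) mult_eq_0_iff order_less_irrefl)
  have s2: "\<And>x. {i. ?g x i \<noteq> 0} = {i. x i \<noteq> 0}" using sq_pos
    by (metis (no_types, lifting) divide_eq_0_iff order_less_irrefl)
  have "bij_betw ?f fin_supp fin_supp"
  proof (rule bij_betw_byWitness[where f'="?g"])
    show "\<forall>a\<in>fin_supp. ?g (?f a) = a" using sq_pos[of E]
      by (auto intro!: ext) (metis less_irrefl nonzero_mult_div_cancel_left)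
    show "\<forall>a\<in>fin_supp. ?f (?g a) = a" using sq_pos[of E]
      by (auto intro!: ext) (metis less_irrefl times_divide_eq_right nonzero_mult_div_cancel_left mult.commute)
    show "?f ` fin_supp \<subseteq> fin_supp" using s by (auto simp: fin_supp_def)
    show "?g ` fin_supp \<subseteq> fin_supp" using s2 by (auto simp: fin_supp_def)
  qed
  then show ?thesis unfolding nonsingular_linear_def
    by (auto simp: algebra_simps)
qed

lemma id_lin: "nonsingular_linear (\<lambda>x. x)"
  unfolding nonsingular_linear_def using bij_betw_id[of fin_supp] by (auto simp: id_def)

theorem theorem2p2:
  fixes E :: "'v::countable \<Rightarrow> 'v \<Rightarrow> bool"
  assumes "graph E"
  shows "\<exists>f h. nonsingular_linear f \<and> nonsingular_linear h \<and>
    (\<forall>u\<in>fin_supp. \<forall>v\<in>fin_supp.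
       evo_mult (rw_coeff E) (f u) (f v) = h (evo_mult (adj_coeff E) u v))"
proof (intro exI conjI ballI)
  show "nonsingular_linear (\<lambda>x i. sqrt (dd E i) * x i)" by (rule scale_lin)
  show "nonsingular_linear (\<lambda>x. x)" by (rule id_lin)
  fix u v :: "'v \<Rightarrow> real"
  have fin: "\<And>i. finite {j. E i j}" using assms unfolding graph_def by blast
  have set: "{i. sqrt (dd E i) * u i \<noteq> 0 \<and> sqrt (dd E i) * v i \<noteq> 0} = {i. u i \<noteq> 0 \<and> v i \<noteq> 0}"
    using sq_pos by (metis (no_types, lifting) mult_eq_0_iff order_less_irrefl)
  have trm: "sqrt (dd E i) * u i * (sqrt (dd E i) * v i) * rw_coeff E i k = u i * v i * adj_coeff E i k" for i k
  proof (cases "E i k")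
    case True
    then have "deg E i > 0" unfolding deg_def using fin[of i] card_gt_0_iff by blast
    then have "dd E i = real (deg E i)" unfolding dd_def by simp
    moreover have "sqrt (dd E i) * sqrt (dd E i) = dd E i" using dd_pos[of E i]
      by simp
    ultimately show ?thesis using True \<open>deg E i > 0\<close>
      unfolding rw_coeff_def adj_coeff_def
      by (simp add: field_simps)
  next
    case False then show ?thesis unfolding rw_coeff_def adj_coeff_def by simp
  qed
  show "evo_mult (rw_coeff E) (\<lambda>i. sqrt (dd E i) * u i) (\<lambda>i. sqrt (dd E i) * v i) = evo_mult (adj_coeff E) u v"
    unfolding evo_mult_def set by (rule ext, rule sum.cong, simp, rule trm)
qed

end
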